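(* Let $\{K_t\}_{t\in(-\infty,T)}$ be a compact convex ancient solution of the planar affine normal flow shrinking to the origin as $t\to T$. Then the affine support function $\sigma(\theta,t)=s(\theta,t)\,\mathfrak{r}^{1/3}(\theta,t)$, viewed as a function of the normal angle $\theta$, satisfies $\partial_t\sigma\le 0$ for all $\theta$ and $t<T$.
   Context: Planar affine normal flow: smooth strictly convex bodies $K_t$ with boundaries evolving by $\partial_t X=-\kappa^{1/3}\nu$ ($\kappa$ curvature, $\nu$ outer unit normal); equivalently, up to tangential reparametrization, $\partial_t X=\mathfrak{n}$, where $\mathfrak{n}=\gamma_{\mathfrak{s}\mathfrak{s}}$ is the affine normal and $\mathfrak{s}$ the affine arc-length. Ancient: exists on $(-\infty,T)$, $T<\infty$. $s$ is the support function of $K_t$ (with respect to the origin, which is interior to all $K_t$) and $\mathfrak{r}=s_{\theta\theta}+s=1/\kappa$ is the radius of curvature, both as functions of the normal angle $\theta$. *)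

theory Defs
  imports "HOL-Analysis.Analysis"
begin

definition supp_fun :: "(real \<times> real) set \<Rightarrow> real \<Rightarrow> real" where
  "supp_fun K \<theta> = Sup ((\<lambda>p. (cos \<theta>, sin \<theta>) \<bullet> p) ` K)"

text \<open>C-infinity smoothness of a real function of two real variables on a set U
  (used with U open): f is differentiable at every point of U, and both partial
  derivatives are again smooth on U.\<close>
coinductive smooth2_on :: "(real \<times> real) set \<Rightarrow> (real \<times> real \<Rightarrow> real) \<Rightarrow> bool" where
  "\<lbrakk> \<forall>x\<in>U. (f has_derivative (\<lambda>h. g1 x * fst h + g2 x * snd h)) (at x);
     smooth2_on U g1; smooth2_on U g2 \<rbrakk> \<Longrightarrow> smooth2_on U f"

definition radius_curv :: "(real \<Rightarrow> real \<Rightarrow> real) \<Rightarrow> real \<Rightarrow> real \<Rightarrow> real" where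
  "radius_curv s \<theta> t = deriv (deriv (\<lambda>\<phi>. s \<phi> t)) \<theta> + s \<theta> t"

text \<open>Ancient solution of the planar affine normal flow on (-infinity, T): a family of
  compact convex bodies containing the origin in their interior, whose support function
  is smooth in (theta, t), strictly convex (r > 0), and evolves by
  d/dt s = - kappa^(1/3) = - r^(-1/3), which is the support-function form of
  d/dt X = - kappa^(1/3) nu.\<close>
definition ancient_ANF :: "(real \<Rightarrow> (real \<times> real) set) \<Rightarrow> real \<Rightarrow> bool" where
  "ancient_ANF K T \<longleftrightarrow>
     (\<forall>t<T. compact (K t) \<and> convex (K t) \<and> (0::real\<times>real) \<in> interior (K t)) \<and>
     smooth2_on (UNIV \<times> {..<T}) (\<lambda>(\<theta>, t). supp_fun (K t) \<theta>) \<and>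
     (\<forall>\<theta> t. t < T \<longrightarrow> radius_curv (\<lambda>\<theta> t. supp_fun (K t) \<theta>) \<theta> t > 0) \<and>
     (\<forall>\<theta> t. t < T \<longrightarrow>
        ((\<lambda>\<tau>. supp_fun (K \<tau>) \<theta>) has_real_derivative
            - ((radius_curv (\<lambda>\<theta> t. supp_fun (K t) \<theta>) \<theta> t) powr (-1/3))) (at t))"

text \<open>K_t shrinks to the origin as t tends to T (Hausdorff convergence to the point 0;
  since 0 lies in every K_t, this amounts to K_t lying in arbitrarily small balls).\<close>
definition shrinks_to_origin :: "(real \<Rightarrow> (real \<times> real) set) \<Rightarrow> real \<Rightarrow> bool" where
  "shrinks_to_origin K T \<longleftrightarrow>
     (\<forall>\<epsilon>>0. \<exists>t0<T. \<forall>t. t0 < t \<and> t < T \<longrightarrow> K t \<subseteq> cball 0 \<epsilon>)"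

definition affine_supp :: "(real \<Rightarrow> (real \<times> real) set) \<Rightarrow> real \<Rightarrow> real \<Rightarrow> real" where
  "affine_supp K \<theta> t = supp_fun (K t) \<theta> * (radius_curv (\<lambda>\<theta> t. supp_fun (K t) \<theta>) \<theta> t) powr (1/3)"

end

theory Submission
  imports Defs
begin


definition D1 :: "(real \<times> real \<Rightarrow> real) \<Rightarrow> real \<times> real \<Rightarrow> real" where
  "D1 f x = deriv (\<lambda>\<phi>. f (\<phi>, snd x)) (fst x)"
definition D2 :: "(real \<times> real \<Rightarrow> real) \<Rightarrow> real \<times> real \<Rightarrow> real" where
  "D2 f x = deriv (\<lambda>\<tau>. f (fst x, \<tau>)) (snd x)"

lemma partial1:
  assumes "(f has_derivative (\<lambda>h. A * fst h + B * snd h)) (at (a,b))"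
  shows "((\<lambda>\<phi>. f (\<phi>, b)) has_real_derivative A) (at a)"
proof -
  have "((\<lambda>\<phi>. (\<phi>, b)) has_derivative (\<lambda>h. (h, 0))) (at a)"
    by (auto intro!: derivative_eq_intros)
  from has_derivative_compose[OF this assms]
  have "((\<lambda>\<phi>. f (\<phi>, b)) has_derivative (\<lambda>h. A * h)) (at a)" by simp
  moreover have "(\<lambda>h. h * B) = (*) B" "(\<lambda>h. A * h) = (*) A" by (auto simp: fun_eq_iff)
  ultimately show ?thesis by (simp add: has_field_derivative_def)
qed

lemma partial2:
  assumes "(f has_derivative (\<lambda>h. A * fst h + B * snd h)) (at (a,b))"
  shows "((\<lambda>\<tau>. f (a, \<tau>)) has_real_derivative B) (at b)"
proof -
  have "((\<lambda>\<tau>. (a, \<tau>)) has_derivative (\<lambda>h. (0, h))) (at b)"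
    by (auto intro!: derivative_eq_intros)
  from has_derivative_compose[OF this assms]
  have "((\<lambda>\<tau>. f (a, \<tau>)) has_derivative (\<lambda>h. B * h)) (at b)" by simp
  moreover have "(\<lambda>h. h * B) = (*) B" "(\<lambda>h. A * h) = (*) A" by (auto simp: fun_eq_iff)
  ultimately show ?thesis by (simp add: has_field_derivative_def)
qed

lemma smooth_transfer:
  assumes "smooth2_on U f" "open U" "\<forall>x\<in>U. f x = g x"
  shows "smooth2_on U g"
  using assms(1,3)
proof (coinduction arbitrary: f g)
  case (smooth2_on f g)
  from smooth2_on(1) obtain g1 g2 where
    d: "\<forall>x\<in>U. (f has_derivative (\<lambda>h. g1 x * fst h + g2 x * snd h)) (at x)"
    and s: "smooth2_on U g1" "smooth2_on U g2"
    by (cases rule: smooth2_on.cases) auto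
  have "\<forall>x\<in>U. (g has_derivative (\<lambda>h. g1 x * fst h + g2 x * snd h)) (at x)"
    using d has_derivative_transform_within_open[OF _ assms(2)] smooth2_on(2) by blast
  then show ?case using s by blast
qed

lemma smooth_D:
  assumes "smooth2_on U f" "open U"
  shows "\<forall>x\<in>U. (f has_derivative (\<lambda>h. D1 f x * fst h + D2 f x * snd h)) (at x)"
    "smooth2_on U (D1 f)" "smooth2_on U (D2 f)"
proof -
  from assms(1) obtain g1 g2 where
    d: "\<forall>x\<in>U. (f has_derivative (\<lambda>h. g1 x * fst h + g2 x * snd h)) (at x)"
    and s: "smooth2_on U g1" "smooth2_on U g2"
    by (cases rule: smooth2_on.cases) auto
  have e1: "\<forall>x\<in>U. g1 x = D1 f x"
  proof
    fix x assume "x \<in> U"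
    then have "((\<lambda>\<phi>. f (\<phi>, snd x)) has_real_derivative g1 x) (at (fst x))"
      using d partial1[of f "g1 x" "g2 x" "fst x" "snd x"] by simp
    then show "g1 x = D1 f x" unfolding D1_def by (simp add: DERIV_imp_deriv)
  qed
  have e2: "\<forall>x\<in>U. g2 x = D2 f x"
  proof
    fix x assume "x \<in> U"
    then have "((\<lambda>\<tau>. f (fst x, \<tau>)) has_real_derivative g2 x) (at (snd x))"
      using d partial2[of f "g1 x" "g2 x" "fst x" "snd x"] by simp
    then show "g2 x = D2 f x" unfolding D2_def by (simp add: DERIV_imp_deriv)
  qed
  show "\<forall>x\<in>U. (f has_derivative (\<lambda>h. D1 f x * fst h + D2 f x * snd h)) (at x)"
    using d e1 e2 by simp
  show "smooth2_on U (D1 f)" using smooth_transfer[OF s(1) assms(2) e1] .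
  show "smooth2_on U (D2 f)" using smooth_transfer[OF s(2) assms(2) e2] .
qed

lemma smooth_cont:
  assumes "smooth2_on U f" shows "continuous_on U f"
proof -
  from assms obtain g1 g2 where
    d: "\<forall>x\<in>U. (f has_derivative (\<lambda>h. g1 x * fst h + g2 x * snd h)) (at x)"
    by (cases rule: smooth2_on.cases) auto
  then show ?thesis
    by (meson continuous_at_imp_continuous_on has_derivative_continuous)
qed

lemma smooth_derivs:
  assumes "smooth2_on U f" "open U" "(a,b) \<in> U"
  shows "((\<lambda>\<phi>. f (\<phi>, b)) has_real_derivative D1 f (a,b)) (at a)"
    "((\<lambda>\<tau>. f (a, \<tau>)) has_real_derivative D2 f (a,b)) (at b)"
  using smooth_D(1)[OF assms(1,2)] assms(3) partial1 partial2 by blast+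



lemma schwarz:
  fixes f f1 f2 f12 f21 :: "real \<times> real \<Rightarrow> real"
  assumes U: "open U" "(a,b) \<in> U"
    and d1: "\<And>x y. (x,y)\<in>U \<Longrightarrow> ((\<lambda>\<phi>. f(\<phi>,y)) has_real_derivative f1 (x,y)) (at x)"
    and d12: "\<And>x y. (x,y)\<in>U \<Longrightarrow> ((\<lambda>\<tau>. f1(x,\<tau>)) has_real_derivative f12 (x,y)) (at y)"
    and d2: "\<And>x y. (x,y)\<in>U \<Longrightarrow> ((\<lambda>\<tau>. f(x,\<tau>)) has_real_derivative f2 (x,y)) (at y)"
    and d21: "\<And>x y. (x,y)\<in>U \<Longrightarrow> ((\<lambda>\<phi>. f2(\<phi>,y)) has_real_derivative f21 (x,y)) (at x)"
    and c12: "continuous_on U f12" and c21: "continuous_on U f21"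
  shows "f12 (a,b) = f21 (a,b)"
proof (rule ccontr)
  assume ne: "f12 (a,b) \<noteq> f21 (a,b)"
  define e where "e = \<bar>f12 (a,b) - f21 (a,b)\<bar> / 3"
  have e: "e > 0" using ne by (simp add: e_def)
  obtain d0 where d0: "d0 > 0" "ball (a,b) d0 \<subseteq> U"
    using U open_contains_ball by blast
  have "continuous (at (a,b)) f12" using c12 U continuous_on_eq_continuous_at by blast
  then obtain da where da: "da > 0" "\<forall>y. dist y (a,b) < da \<longrightarrow> dist (f12 y) (f12 (a,b)) < e"
    using e continuous_at_eps_delta by blast
  have "continuous (at (a,b)) f21" using c21 U continuous_on_eq_continuous_at by blast
  then obtain db where db: "db > 0" "\<forall>y. dist y (a,b) < db \<longrightarrow> dist (f21 y) (f21 (a,b)) < e"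
    using e continuous_at_eps_delta by blast
  define h where "h = min d0 (min da db) / 3"
  have h: "h > 0" using d0 da db by (simp add: h_def)
  have near: "dist (x,y) (a,b) < min d0 (min da db)" if "a \<le> x" "x \<le> a+h" "b \<le> y" "y \<le> b+h" for x y
  proof -
    have "dist (x,y) (a,b) \<le> dist x a + dist y b"
      using sqrt_sum_squares_le_sum_abs[of "dist x a" "dist y b"] by (simp add: dist_Pair_Pair)
    also have "\<dots> \<le> 2*h" using that by (simp add: dist_real_def)
    also have "\<dots> < min d0 (min da db)" using h unfolding h_def by linarith
    finally show ?thesis .
  qed
  have inU: "(x,y) \<in> U" if "a \<le> x" "x \<le> a+h" "b \<le> y" "y \<le> b+h" for x y
    using near[OF that] d0 by (auto simp: dist_commute subset_iff)
  define \<Delta> where "\<Delta> = f(a+h,b+h) - f(a+h,b) - f(a,b+h) + f(a,b)"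
  have der1: "DERIV (\<lambda>\<phi>. f(\<phi>,b+h) - f(\<phi>,b)) x :> f1(x,b+h) - f1(x,b)" if "a \<le> x" "x \<le> a+h" for x
    using that h by (intro DERIV_diff d1 inU) auto
  obtain x1 where x1: "a < x1" "x1 < a+h" "(\<lambda>\<phi>. f(\<phi>,b+h) - f(\<phi>,b)) (a+h) - (\<lambda>\<phi>. f(\<phi>,b+h) - f(\<phi>,b)) a
      = (a+h - a) * (f1 (x1,b+h) - f1 (x1,b))"
    using MVT2[of a "a+h", OF _ der1] h by auto
  have der2: "DERIV (\<lambda>\<tau>. f1(x1,\<tau>)) y :> f12(x1,y)" if "b \<le> y" "y \<le> b+h" for y
    using that h x1 by (intro d12 inU) auto
  obtain y1 where y1: "b < y1" "y1 < b+h" "f1 (x1,b+h) - f1 (x1,b) = (b+h-b) * f12 (x1,y1)"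
    using MVT2[of b "b+h", OF _ der2] h by auto
  have der3: "DERIV (\<lambda>\<tau>. f(a+h,\<tau>) - f(a,\<tau>)) y :> f2(a+h,y) - f2(a,y)" if "b \<le> y" "y \<le> b+h" for y
    using that h by (intro DERIV_diff d2 inU) auto
  obtain y2 where y2: "b < y2" "y2 < b+h" "(\<lambda>\<tau>. f(a+h,\<tau>) - f(a,\<tau>)) (b+h) - (\<lambda>\<tau>. f(a+h,\<tau>) - f(a,\<tau>)) b
      = (b+h - b) * (f2 (a+h,y2) - f2 (a,y2))"
    using MVT2[of b "b+h", OF _ der3] h by auto
  have der4: "DERIV (\<lambda>\<phi>. f2(\<phi>,y2)) x :> f21(x,y2)" if "a \<le> x" "x \<le> a+h" for x
    using that h y2 by (intro d21 inU) auto
  obtain x2 where x2: "a < x2" "x2 < a+h" "f2 (a+h,y2) - f2 (a,y2) = (a+h-a) * f21 (x2,y2)"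
    using MVT2[of a "a+h", OF _ der4] h by auto
  have "\<Delta> = h*h*f12 (x1,y1)" using x1 y1 by (simp add: \<Delta>_def algebra_simps)
  moreover have "\<Delta> = h*h*f21 (x2,y2)" using x2 y2 by (simp add: \<Delta>_def algebra_simps)
  ultimately have eq: "f12 (x1,y1) = f21 (x2,y2)" using h by simp
  have "dist (f12 (x1,y1)) (f12 (a,b)) < e"
    using da(2) near[of x1 y1] x1 y1 by auto
  moreover have "dist (f21 (x2,y2)) (f21 (a,b)) < e"
    using db(2) near[of x2 y2] x2 y2 by auto
  ultimately have "\<bar>f12 (a,b) - f21 (a,b)\<bar> < 2*e" using eq unfolding dist_real_def by linarith
  then show False using e unfolding e_def by (simp add: field_simps)
qed



lemma smooth_sym:
  assumes "smooth2_on U f" "open U" "x \<in> U"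
  shows "D2 (D1 f) x = D1 (D2 f) x"
proof -
  obtain a b where x: "x = (a,b)" by (cases x)
  have s1: "smooth2_on U (D1 f)" and s2: "smooth2_on U (D2 f)"
    using smooth_D[OF assms(1,2)] by auto
  show ?thesis unfolding x
  proof (rule schwarz[of U a b f "D1 f" "D2 (D1 f)" "D2 f" "D1 (D2 f)"])
    show "open U" "(a,b) \<in> U" using assms x by auto
    show "\<And>x y. (x,y)\<in>U \<Longrightarrow> ((\<lambda>\<phi>. f(\<phi>,y)) has_real_derivative D1 f (x,y)) (at x)"
      using smooth_derivs[OF assms(1,2)] by blast
    show "\<And>x y. (x,y)\<in>U \<Longrightarrow> ((\<lambda>\<tau>. f(x,\<tau>)) has_real_derivative D2 f (x,y)) (at y)"
      using smooth_derivs[OF assms(1,2)] by blast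
    show "\<And>x y. (x,y)\<in>U \<Longrightarrow> ((\<lambda>\<tau>. D1 f(x,\<tau>)) has_real_derivative D2 (D1 f) (x,y)) (at y)"
      using smooth_derivs[OF s1 assms(2)] by blast
    show "\<And>x y. (x,y)\<in>U \<Longrightarrow> ((\<lambda>\<phi>. D2 f(\<phi>,y)) has_real_derivative D1 (D2 f) (x,y)) (at x)"
      using smooth_derivs[OF s2 assms(2)] by blast
    show "continuous_on U (D2 (D1 f))" using smooth_cont smooth_D(3)[OF s1 assms(2)] by blast
    show "continuous_on U (D1 (D2 f))" using smooth_cont smooth_D(2)[OF s2 assms(2)] by blast
  qed
qed

lemma openU: "open (UNIV \<times> {..<(T::real)})"
  by (simp add: open_Times)

lemma smooth_sym3:
  assumes "smooth2_on (UNIV \<times> {..<T}) f" "t < T"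
  shows "D2 (D1 (D1 f)) (\<theta>,t) = D1 (D1 (D2 f)) (\<theta>,t)"
proof -
  have s1: "smooth2_on (UNIV \<times> {..<T}) (D1 f)" using smooth_D[OF assms(1) openU] by auto
  have "D2 (D1 (D1 f)) (\<theta>,t) = D1 (D2 (D1 f)) (\<theta>,t)"
    using smooth_sym[OF s1 openU] assms(2) by auto
  also have "\<dots> = D1 (D1 (D2 f)) (\<theta>,t)"
  proof -
    have "\<forall>\<phi>. D2 (D1 f) (\<phi>,t) = D1 (D2 f) (\<phi>,t)"
      using smooth_sym[OF assms(1) openU] assms(2) by auto
    then show ?thesis by (simp add: D1_def)
  qed
  finally show ?thesis .
qed



lemma periodic_reduce:
  fixes g :: "real \<Rightarrow> 'a"
  assumes per: "\<And>x. g (x + 2*pi) = g x"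
  shows "\<exists>y. 0 \<le> y \<and> y \<le> 2*pi \<and> g y = g x"
proof -
  have pn: "g (y + real n * (2*pi)) = g y" for y n
  proof (induction n)
    case 0 then show ?case by simp
  next
    case (Suc n)
    have "g (y + real (Suc n) * (2*pi)) = g ((y + real n * (2*pi)) + 2*pi)"
      by (simp add: algebra_simps)
    also have "\<dots> = g y" using per Suc by simp
    finally show ?case .
  qed
  define k where "k = floor (x / (2*pi))"
  define y where "y = x - real_of_int k * (2*pi)"
  have k1: "real_of_int k \<le> x / (2*pi)" and k2: "x / (2*pi) < real_of_int k + 1"
    unfolding k_def by linarith+
  have "real_of_int k * (2*pi) \<le> x" using k1 pi_gt_zero by (simp add: field_simps)
  moreover have "x < (real_of_int k + 1) * (2*pi)" using k2 pi_gt_zero by (simp add: field_simps)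
  ultimately have y: "0 \<le> y" "y \<le> 2*pi" unfolding y_def by (auto simp: algebra_simps)
  have "g y = g x"
  proof (cases "k \<ge> 0")
    case True
    then have "x = y + real (nat k) * (2*pi)" unfolding y_def by simp
    then show ?thesis using pn by simp
  next
    case False
    then have "y = x + real (nat (-k)) * (2*pi)" unfolding y_def by simp
    then show ?thesis using pn by simp
  qed
  then show ?thesis using y by blast
qed

lemma second_deriv_min:
  fixes g g1 :: "real \<Rightarrow> real"
  assumes mn: "\<And>y. g x \<le> g y" and d: "\<And>y. DERIV g y :> g1 y" and d1: "DERIV g1 x :> c"
  shows "c \<ge> 0"
proof (rule ccontr)
  assume "\<not> c \<ge> 0" then have c: "c < 0" by simp
  have z: "g1 x = 0" using DERIV_local_min[OF d, of 1 x] mn by auto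
  obtain d0 where d0: "d0 > 0" "\<forall>h>0. h < d0 \<longrightarrow> g1 x > g1 (x + h)"
    using DERIV_neg_dec_right[OF d1 c] by blast
  define h where "h = d0/2"
  have h: "h > 0" "h < d0" using d0 by (auto simp: h_def)
  obtain z' where z': "x < z'" "z' < x + h" "g (x+h) - g x = (x + h - x) * g1 z'"
    using MVT2[of x "x+h" g g1] d h by auto
  have "g1 z' < 0" using d0(2)[rule_format, of "z' - x"] z' h z by auto
  then have "h * g1 z' < 0" using h(1) by (simp add: mult_pos_neg)
  then have "g (x+h) < g x" using z'(3) by simp
  then show False using mn[of "x+h"] by simp
qed

lemma left_deriv_nonpos:
  fixes f :: "real \<Rightarrow> real"
  assumes d: "DERIV f x :> l" and "d0 > 0" and le: "\<And>h. 0 < h \<Longrightarrow> h < d0 \<Longrightarrow> f x \<le> f (x - h)"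
  shows "l \<le> 0"
proof (rule ccontr)
  assume "\<not> l \<le> 0" then have "l > 0" by simp
  then obtain d1 where d1: "d1 > 0" "\<forall>h>0. h < d1 \<longrightarrow> f (x - h) < f x"
    using DERIV_pos_inc_left[OF d] by blast
  define h where "h = min d0 d1 / 2"
  have "h > 0" "h < d0" "h < d1" using d1 \<open>d0 > 0\<close> by (auto simp: h_def)
  then show False using d1(2) le by force
qed

lemma alg_contra:
  fixes U \<psi> p q a b P2 D :: real
  assumes "U > 0" "\<psi> \<noteq> 0" "p = \<psi> * U" "3 * p = U^4 * q" "q = a + U" "b \<ge> \<psi> * a"
    "3 * P2 = 4 * U^3 * p * q + U^4 * (b + p)" "D = P2 - 2 * \<psi>^2 * U - \<psi> * p"
  shows "D > 0"
proof -
  have e1: "U^4 * q = 3 * \<psi> * U" using assms(3,4) by simp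
  have "3 * P2 = 4 * \<psi> * (U^4 * q) + U^4 * b + \<psi> * (U^4 * q) - \<psi> * U^4 * a"
    using assms(3,5,7) by (simp add: algebra_simps power_def)
  also have "\<dots> = 15 * \<psi>^2 * U + U^4 * (b - \<psi> * a)"
    unfolding e1 by (simp add: algebra_simps power2_eq_square)
  finally have "3 * P2 = 15 * \<psi>^2 * U + U^4 * (b - \<psi> * a)" .
  moreover have "U^4 * (b - \<psi> * a) \<ge> 0" using assms(1,6) by simp
  moreover have "\<psi>^2 * U > 0" using assms(1,2) by simp
  ultimately show ?thesis using assms(3,8) by (simp add: power2_eq_square algebra_simps)
qed



lemma maxprin:
  fixes u P u1 u11 P1 P11 P2 :: "real \<times> real \<Rightarrow> real" and T :: real
  assumes cu: "continuous_on (UNIV \<times> {..<T}) u" and cP: "continuous_on (UNIV \<times> {..<T}) P"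
    and pos: "\<And>\<theta> t. t < T \<Longrightarrow> u (\<theta>,t) > 0"
    and peru: "\<And>\<theta> t. u (\<theta> + 2*pi, t) = u (\<theta>, t)"
    and perP: "\<And>\<theta> t. P (\<theta> + 2*pi, t) = P (\<theta>, t)"
    and du1: "\<And>\<theta> t. t < T \<Longrightarrow> DERIV (\<lambda>\<phi>. u (\<phi>,t)) \<theta> :> u1 (\<theta>,t)"
    and du11: "\<And>\<theta> t. t < T \<Longrightarrow> DERIV (\<lambda>\<phi>. u1 (\<phi>,t)) \<theta> :> u11 (\<theta>,t)"
    and dP1: "\<And>\<theta> t. t < T \<Longrightarrow> DERIV (\<lambda>\<phi>. P (\<phi>,t)) \<theta> :> P1 (\<theta>,t)"
    and dP11: "\<And>\<theta> t. t < T \<Longrightarrow> DERIV (\<lambda>\<phi>. P1 (\<phi>,t)) \<theta> :> P11 (\<theta>,t)"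
    and dut: "\<And>\<theta> t. t < T \<Longrightarrow> DERIV (\<lambda>\<tau>. u (\<theta>,\<tau>)) t :> P (\<theta>,t)"
    and dPt: "\<And>\<theta> t. t < T \<Longrightarrow> DERIV (\<lambda>\<tau>. P (\<theta>,\<tau>)) t :> P2 (\<theta>,t)"
    and eq1: "\<And>\<theta> t. t < T \<Longrightarrow> 3 * P (\<theta>,t) = u (\<theta>,t)^4 * (u11 (\<theta>,t) + u (\<theta>,t))"
    and eq2: "\<And>\<theta> t. t < T \<Longrightarrow> 3 * P2 (\<theta>,t) = 4 * u (\<theta>,t)^3 * P (\<theta>,t) * (u11 (\<theta>,t) + u (\<theta>,t))
                 + u (\<theta>,t)^4 * (P11 (\<theta>,t) + P (\<theta>,t))"
    and t1: "t1 < T"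
  shows "P (\<theta>1, t1) \<ge> 0"
proof (rule ccontr)
  assume "\<not> P (\<theta>1, t1) \<ge> 0"
  then have neg: "P (\<theta>1, t1) < 0" by simp
  define c where "c = P (\<theta>1, t1) / u (\<theta>1, t1)"
  have c: "c < 0" using neg pos[OF t1] by (simp add: c_def divide_neg_pos)
  define t0 where "t0 = t1 + 1/c"
  have t01: "t0 < t1" using c by (simp add: t0_def)
  define \<psi> where "\<psi> = (\<lambda>t. - 1 / (2 * (t - t0)))"
  define Z where "Z = (\<lambda>x. P x - \<psi> (snd x) * u x)"
  have perZ: "\<And>\<theta> t. Z (\<theta> + 2*pi, t) = Z (\<theta>, t)" by (simp add: Z_def peru perP)
  have red: "\<exists>\<theta>'. 0 \<le> \<theta>' \<and> \<theta>' \<le> 2*pi \<and> Z (\<theta>', t) = Z (\<theta>, t)" for \<theta> t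
    using periodic_reduce[of "\<lambda>\<theta>. Z (\<theta>, t)" \<theta>] perZ by simp
  define C where "C = {0..2*pi} \<times> {t0..t1}"
  have Csub: "C \<subseteq> UNIV \<times> {..<T}" using t1 by (auto simp: C_def)
  have Ccomp: "compact C" unfolding C_def by (intro compact_Times compact_Icc)
  have Cne: "C \<noteq> {}" using t01 pi_gt_zero by (auto simp: C_def)
  obtain M where M: "\<forall>x\<in>C. \<bar>P x\<bar> \<le> M"
  proof -
    have "compact (P ` C)" using compact_continuous_image[OF continuous_on_subset[OF cP Csub] Ccomp] .
    then have "bounded (P ` C)" by (rule compact_imp_bounded)
    then show ?thesis using that by (auto simp: bounded_real)
  qed
  obtain xm where xm: "xm \<in> C" "\<forall>y\<in>C. u xm \<le> u y"
    using continuous_attains_inf[OF Ccomp Cne continuous_on_subset[OF cu Csub]] by blast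
  define m where "m = u xm"
  have m: "m > 0" using xm(1) Csub pos unfolding m_def by (cases xm) auto
  have M0: "M \<ge> 0" using M Cne by force
  define \<delta> where "\<delta> = min (m / (2 * (M + 1))) (t1 - t0) / 2"
  have mpos: "m / (2 * (M + 1)) > 0" using m M0 by simp
  have aux: "\<And>a b::real. a > 0 \<Longrightarrow> b > 0 \<Longrightarrow> 0 < min a b / 2 \<and> min a b / 2 < a \<and> min a b / 2 < b"
    by (auto simp: min_def)
  have \<delta>: "\<delta> > 0" "\<delta> < m / (2 * (M + 1))" "\<delta> < t1 - t0"
    using aux[OF mpos, of "t1 - t0"] t01 unfolding \<delta>_def by auto
  define ta where "ta = t0 + \<delta>"
  have ta: "t0 < ta" "ta < t1" using \<delta> by (auto simp: ta_def)
  have Zta: "Z (\<theta>, ta) > 0" if "0 \<le> \<theta>" "\<theta> \<le> 2*pi" for \<theta>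
  proof -
    have inC: "(\<theta>, ta) \<in> C" using that ta by (auto simp: C_def)
    have uge: "u (\<theta>, ta) \<ge> m" using xm inC unfolding m_def by blast
    have Pge: "P (\<theta>, ta) \<ge> - M" using M inC by force
    have "m / (2 * \<delta>) > M + 1"
      using \<delta> m M0 by (simp add: field_simps)
    moreover have "u (\<theta>, ta) / (2 * \<delta>) \<ge> m / (2 * \<delta>)"
      using uge \<delta> by (simp add: divide_right_mono)
    moreover have "Z (\<theta>, ta) = P (\<theta>, ta) + u (\<theta>, ta) / (2 * \<delta>)"
      by (simp add: Z_def \<psi>_def ta_def)
    ultimately show ?thesis using Pge by linarith
  qed
  define Cs where "Cs = {0..2*pi} \<times> {ta..t1}"
  have Cssub: "Cs \<subseteq> UNIV \<times> {..<T}" using t1 by (auto simp: Cs_def)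
  have cZ: "continuous_on Cs Z"
  proof -
    have "continuous_on Cs (\<lambda>x. \<psi> (snd x))"
      unfolding \<psi>_def using ta
      by (intro continuous_intros) (auto simp: Cs_def)
    then show ?thesis unfolding Z_def
      using continuous_on_subset[OF cP Cssub] continuous_on_subset[OF cu Cssub]
      by (intro continuous_intros) auto
  qed
  define K' where "K' = Cs \<inter> Z -` {..0}"
  have CsC: "compact Cs" unfolding Cs_def by (intro compact_Times compact_Icc)
  have clK: "closed K'" unfolding K'_def
    using continuous_closed_preimage[OF cZ compact_imp_closed[OF CsC] closed_atMost] .
  have "compact (Cs \<inter> K')" using compact_Int_closed[OF CsC clK] .
  moreover have "Cs \<inter> K' = K'" by (auto simp: K'_def)
  ultimately have cK: "compact K'" by simp
  define S where "S = snd ` K'"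
  have cS: "compact S" unfolding S_def
    using compact_continuous_image[OF continuous_on_snd[OF continuous_on_id] cK] by simp
  have "\<psi> t1 = c / 2" using c by (simp add: \<psi>_def t0_def field_simps)
  obtain \<theta>1' where th1: "0 \<le> \<theta>1'" "\<theta>1' \<le> 2*pi" "Z (\<theta>1', t1) = Z (\<theta>1, t1)" using red by blast
  have "Z (\<theta>1, t1) = u (\<theta>1, t1) * (c - c/2)"
    using \<open>\<psi> t1 = c / 2\<close> pos[OF t1, of \<theta>1] by (simp add: Z_def c_def field_simps)
  also have "\<dots> < 0" using c pos[OF t1] by (simp add: mult_pos_neg)
  finally have "(\<theta>1', t1) \<in> K'" using th1 ta by (auto simp: K'_def Cs_def)
  then have Sne: "S \<noteq> {}" by (auto simp: S_def)
  obtain ts where ts: "ts \<in> S" "\<forall>y\<in>S. ts \<le> y"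
    using compact_attains_inf[OF cS Sne] by blast
  obtain \<theta>s where ths: "(\<theta>s, ts) \<in> K'" using ts(1) by (auto simp: S_def)
  then have ths': "0 \<le> \<theta>s" "\<theta>s \<le> 2*pi" "ta \<le> ts" "ts \<le> t1" "Z (\<theta>s, ts) \<le> 0"
    by (auto simp: K'_def Cs_def)
  have tsT: "ts < T" using ths' t1 by simp
  have "ts \<noteq> ta" using Zta[OF ths'(1,2)] ths'(5) by auto
  then have tsa: "ta < ts" using ths' by simp
  have before: "Z (\<theta>, t) > 0" if "ta \<le> t" "t < ts" for \<theta> t
  proof (rule ccontr)
    assume "\<not> Z (\<theta>, t) > 0"
    obtain \<theta>' where "0 \<le> \<theta>'" "\<theta>' \<le> 2*pi" "Z (\<theta>', t) = Z (\<theta>, t)" using red by blast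
    then have "(\<theta>', t) \<in> K'" using that ths' \<open>\<not> Z (\<theta>, t) > 0\<close> by (auto simp: K'_def Cs_def)
    then have "t \<in> S" by (force simp: S_def)
    then show False using ts(2) that by force
  qed
  have dpsi: "DERIV \<psi> t :> 1 / (2 * (t - t0)^2)" if "t0 < t" for t
  proof -
    have "DERIV (\<lambda>t. - 1 / (2 * (t - t0))) t :> - (- (2 * 1) / (2 * (t - t0))^2)"
      using that by (intro derivative_eq_intros) (auto simp: power2_eq_square)
    moreover have "- (- (2 * 1) / (2 * (t - t0))^2) = 1 / (2 * (t - t0)^2)"
    proof -
      have X: "(t - t0)^2 > 0" using that by simp
      have sq: "(2 * (t - t0))^2 = 4 * (t - t0)^2" by (simp add: power2_eq_square algebra_simps)
      have "- (- (2 * 1) / (2 * (t - t0))^2) = 2 / (4 * (t - t0)^2)" by (simp only: sq)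
      also have "\<dots> = 1 / (2 * (t - t0)^2)" using X by (simp add: divide_simps del: zero_less_power2)
      finally show ?thesis .
    qed
    ultimately show ?thesis unfolding \<psi>_def by (rule DERIV_cong)
  qed
  have dZt: "DERIV (\<lambda>\<tau>. Z (\<theta>, \<tau>)) ts :> P2 (\<theta>, ts) - (1 / (2 * (ts - t0)^2) * u (\<theta>, ts) + \<psi> ts * P (\<theta>, ts))" for \<theta>
  proof -
    have "t0 < ts" using tsa ta by simp
    from DERIV_diff[OF dPt[OF tsT, of \<theta>] DERIV_mult[OF dpsi[OF this] dut[OF tsT, of \<theta>]]]
    show ?thesis unfolding Z_def by (simp add: mult.commute)
  qed
  have atts: "Z (\<theta>, ts) \<ge> 0" for \<theta>
  proof -
    have "isCont (\<lambda>\<tau>. Z (\<theta>, \<tau>)) ts" using DERIV_isCont[OF dZt] .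
    then have "((\<lambda>\<tau>. Z (\<theta>, \<tau>)) \<longlongrightarrow> Z (\<theta>, ts)) (at_left ts)"
      by (simp add: isCont_def filterlim_at_split)
    moreover have "eventually (\<lambda>\<tau>. 0 \<le> Z (\<theta>, \<tau>)) (at_left ts)"
      using eventually_mono[OF eventually_at_left_real[OF tsa]] before by (simp add: less_imp_le)
    ultimately show ?thesis using tendsto_lowerbound trivial_limit_at_left_real by blast
  qed
  have Z0: "Z (\<theta>s, ts) = 0" using atts ths'(5) by (simp add: order_antisym)
  define ps where "ps = \<psi> ts"
  have ps0: "ps \<noteq> 0" using tsa ta by (simp add: ps_def \<psi>_def)
  have spatial: "P11 (\<theta>s, ts) - ps * u11 (\<theta>s, ts) \<ge> 0"
  proof (rule second_deriv_min[of "\<lambda>\<phi>. Z (\<phi>, ts)" \<theta>s "\<lambda>\<phi>. P1 (\<phi>, ts) - ps * u1 (\<phi>, ts)"])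
    show "Z (\<theta>s, ts) \<le> Z (y, ts)" for y using Z0 atts by simp
    show "DERIV (\<lambda>\<phi>. Z (\<phi>, ts)) y :> P1 (y, ts) - ps * u1 (y, ts)" for y
      unfolding Z_def ps_def using DERIV_diff[OF dP1[OF tsT] DERIV_cmult[OF du1[OF tsT]]] by simp
    show "DERIV (\<lambda>\<phi>. P1 (\<phi>, ts) - ps * u1 (\<phi>, ts)) \<theta>s :> P11 (\<theta>s, ts) - ps * u11 (\<theta>s, ts)"
      using DERIV_diff[OF dP11[OF tsT] DERIV_cmult[OF du11[OF tsT]]] by simp
  qed
  have temporal: "P2 (\<theta>s, ts) - (1 / (2 * (ts - t0)^2) * u (\<theta>s, ts) + \<psi> ts * P (\<theta>s, ts)) \<le> 0"
  proof (rule left_deriv_nonpos[OF dZt, of "ts - ta"])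
    show "0 < ts - ta" using tsa by simp
    show "Z (\<theta>s, ts) \<le> Z (\<theta>s, ts - h)" if "0 < h" "h < ts - ta" for h
      using before[of "ts - h" \<theta>s] that Z0 by simp
  qed
  have "P2 (\<theta>s, ts) - (1 / (2 * (ts - t0)^2) * u (\<theta>s, ts) + \<psi> ts * P (\<theta>s, ts)) > 0"
  proof (rule alg_contra[of "u (\<theta>s, ts)" ps "P (\<theta>s, ts)" "u11 (\<theta>s, ts) + u (\<theta>s, ts)" "u11 (\<theta>s, ts)" "P11 (\<theta>s, ts)"])
    show "0 < u (\<theta>s, ts)" using pos[OF tsT] .
    show "ps \<noteq> 0" using ps0 .
    show "P (\<theta>s, ts) = ps * u (\<theta>s, ts)" using Z0 by (simp add: Z_def ps_def)
    show "3 * P (\<theta>s, ts) = u (\<theta>s, ts) ^ 4 * (u11 (\<theta>s, ts) + u (\<theta>s, ts))" using eq1[OF tsT] .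
    show "u11 (\<theta>s, ts) + u (\<theta>s, ts) = u11 (\<theta>s, ts) + u (\<theta>s, ts)" ..
    show "ps * u11 (\<theta>s, ts) \<le> P11 (\<theta>s, ts)" using spatial by simp
    show "3 * P2 (\<theta>s, ts) = 4 * u (\<theta>s, ts) ^ 3 * P (\<theta>s, ts) * (u11 (\<theta>s, ts) + u (\<theta>s, ts))
       + u (\<theta>s, ts) ^ 4 * (P11 (\<theta>s, ts) + P (\<theta>s, ts))" using eq2[OF tsT] .
    have sq: "(2 * (ts - t0))^2 = 4 * (ts - t0)^2" by (simp add: power2_eq_square algebra_simps)
    have "ps^2 = 1 / (2 * (ts - t0))^2" by (simp add: ps_def \<psi>_def power_divide)
    also have "\<dots> = 1 / (4 * (ts - t0)^2)" by (simp only: sq)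
    finally have "1 / (2 * (ts - t0)^2) = 2 * ps^2" by simp
    then show "P2 (\<theta>s, ts) - (1 / (2 * (ts - t0)^2) * u (\<theta>s, ts) + \<psi> ts * P (\<theta>s, ts))
       = P2 (\<theta>s, ts) - 2 * ps^2 * u (\<theta>s, ts) - ps * P (\<theta>s, ts)"
      by (simp add: ps_def)
  qed
  then show False using temporal by simp
qed



lemma supp_nonneg:
  assumes "compact K" "(0::real\<times>real) \<in> K"
  shows "supp_fun K \<theta> \<ge> 0"
proof -
  have "continuous_on K (\<lambda>p. (cos \<theta>, sin \<theta>) \<bullet> p)" by (intro continuous_intros)
  then have "compact ((\<lambda>p. (cos \<theta>, sin \<theta>) \<bullet> p) ` K)" using compact_continuous_image assms(1) by blast
  then have bdd: "bdd_above ((\<lambda>p. (cos \<theta>, sin \<theta>) \<bullet> p) ` K)"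
    by (intro bounded_imp_bdd_above compact_imp_bounded)
  have "(cos \<theta>, sin \<theta>) \<bullet> (0::real\<times>real) = 0" by (rule inner_zero_right)
  then have "(0::real) \<in> (\<lambda>p. (cos \<theta>, sin \<theta>) \<bullet> p) ` K"
    using assms(2) by (metis image_eqI)
  from cSup_upper[OF this bdd] show ?thesis unfolding supp_fun_def .
qed

lemma supp_per: "supp_fun K (\<theta> + 2*pi) = supp_fun K \<theta>"
  unfolding supp_fun_def by simp

theorem mainTheorem2:
  fixes K :: "real \<Rightarrow> (real \<times> real) set" and T :: real
  assumes "ancient_ANF K T"
    and "shrinks_to_origin K T"
  shows "\<forall>\<theta> t. t < T \<longrightarrow> deriv (\<lambda>\<tau>. affine_supp K \<theta> \<tau>) t \<le> 0"
proof -
  define U where "U = (UNIV::real set) \<times> {..<T}"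
  have oU: "open U" unfolding U_def by (rule openU)
  define F where "F = (\<lambda>(\<theta>::real, t::real). supp_fun (K t) \<theta>)"
  note A = assms(1)[unfolded ancient_ANF_def]
  have bodies: "\<And>t. t < T \<Longrightarrow> compact (K t) \<and> convex (K t) \<and> (0::real\<times>real) \<in> interior (K t)"
    using conjunct1[OF A] by blast
  have sF: "smooth2_on U F" using conjunct1[OF conjunct2[OF A]] unfolding U_def F_def .
  define R where "R = (\<lambda>x. radius_curv (\<lambda>\<theta> t. supp_fun (K t) \<theta>) (fst x) (snd x))"
  have Rpos: "\<And>\<theta> t. t < T \<Longrightarrow> R (\<theta>,t) > 0" using conjunct1[OF conjunct2[OF conjunct2[OF A]]] unfolding R_def by simp
  have Rev: "\<And>\<theta> t. t < T \<Longrightarrow> ((\<lambda>\<tau>. supp_fun (K \<tau>) \<theta>) has_real_derivative - (R (\<theta>,t) powr (-1/3))) (at t)"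
    using conjunct2[OF conjunct2[OF conjunct2[OF A]]] unfolding R_def by simp
  have Req: "R x = D1 (D1 F) x + F x" for x
    by (simp add: R_def radius_curv_def D1_def F_def case_prod_beta)
  define G where "G = D2 F"
  define H where "H = D2 G"
  have sD: "\<And>f. smooth2_on U f \<Longrightarrow> smooth2_on U (D1 f) \<and> smooth2_on U (D2 f)"
    using smooth_D oU by blast
  have sG: "smooth2_on U G" unfolding G_def using conjunct2[OF sD[OF sF]] .
  have sH: "smooth2_on U H" unfolding H_def using conjunct2[OF sD[OF sG]] .
  have inU: "\<And>\<theta> t. t < T \<Longrightarrow> (\<theta>,t) \<in> U" by (simp add: U_def)
  have dth: "\<And>f \<theta> t. smooth2_on U f \<Longrightarrow> t < T \<Longrightarrow> DERIV (\<lambda>\<phi>. f (\<phi>,t)) \<theta> :> D1 f (\<theta>,t)"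
    using smooth_derivs(1)[OF _ oU inU] by blast
  have dt: "\<And>f \<theta> t. smooth2_on U f \<Longrightarrow> t < T \<Longrightarrow> DERIV (\<lambda>\<tau>. f (\<theta>,\<tau>)) t :> D2 f (\<theta>,t)"
    using smooth_derivs(2)[OF _ oU inU] by blast
  have GR: "G (\<theta>,t) = - (R (\<theta>,t) powr (-1/3))" if "t < T" for \<theta> t
  proof -
    have "DERIV (\<lambda>\<tau>. supp_fun (K \<tau>) \<theta>) t :> G (\<theta>,t)"
      using dt[OF sF that, of \<theta>] by (simp add: G_def F_def)
    then show ?thesis using Rev[OF that] DERIV_unique by blast
  qed
  have Gneg: "G (\<theta>,t) < 0" if "t < T" for \<theta> t using GR[OF that, of \<theta>] Rpos[OF that, of \<theta>] by simp
  have RG3: "R (\<theta>,t) * G (\<theta>,t)^3 = -1" if "t < T" for \<theta> t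
  proof -
    have r: "R (\<theta>,t) > 0" using Rpos[OF that] .
    have "G (\<theta>,t)^3 = - ((R (\<theta>,t) powr (-1/3))^3)" using GR[OF that] by simp
    also have "(R (\<theta>,t) powr (-1/3))^3 = R (\<theta>,t) powr (-1)"
      using r by (simp add: powr_power)
    also have "\<dots> = 1 / R (\<theta>,t)" using powr_neg_one[OF r] by simp
    finally show ?thesis using r by simp
  qed
  have dR: "DERIV (\<lambda>\<tau>. R (\<theta>,\<tau>)) t :> D1 (D1 G) (\<theta>,t) + G (\<theta>,t)" if "t < T" for \<theta> t
  proof -
    have s11: "smooth2_on U (D1 (D1 F))" using conjunct1[OF sD[OF conjunct1[OF sD[OF sF]]]] .
    have "DERIV (\<lambda>\<tau>. D1 (D1 F) (\<theta>,\<tau>) + F (\<theta>,\<tau>)) t :> D2 (D1 (D1 F)) (\<theta>,t) + D2 F (\<theta>,t)"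
      using DERIV_add[OF dt[OF s11 that, of \<theta>] dt[OF sF that, of \<theta>]] .
    moreover have "D2 (D1 (D1 F)) (\<theta>,t) = D1 (D1 G) (\<theta>,t)"
      using smooth_sym3[OF sF[unfolded U_def] that] by (simp add: G_def)
    ultimately show ?thesis by (simp add: Req G_def)
  qed
  have E3: "3 * H (\<theta>,t) = G (\<theta>,t)^4 * (D1 (D1 G) (\<theta>,t) + G (\<theta>,t))" if "t < T" for \<theta> t
  proof -
    have d1: "DERIV (\<lambda>\<tau>. R (\<theta>,\<tau>) * G (\<theta>,\<tau>)^3) t :>
        (D1 (D1 G) (\<theta>,t) + G (\<theta>,t)) * G (\<theta>,t)^3 + R (\<theta>,t) * (of_nat 3 * (H (\<theta>,t) * G (\<theta>,t)^(3 - Suc 0)))"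
      by (rule DERIV_cong[OF DERIV_mult[OF dR[OF that, of \<theta>] DERIV_power[OF dt[OF sG that, of \<theta>], where n=3]]])
        (simp add: H_def algebra_simps)
    have d2: "DERIV (\<lambda>\<tau>. R (\<theta>,\<tau>) * G (\<theta>,\<tau>)^3) t :> 0"
      by (rule has_field_derivative_transform_within_open[OF DERIV_const[of "-1::real" "at t"], of "{..<T}"])
        (use that RG3 in auto)
    have e: "(D1 (D1 G) (\<theta>,t) + G (\<theta>,t)) * G (\<theta>,t)^3 + R (\<theta>,t) * (3 * (H (\<theta>,t) * G (\<theta>,t)^2)) = 0"
      using DERIV_unique[OF d1 d2] by simp
    define g where "g = G (\<theta>,t)"
    define r where "r = R (\<theta>,t)"
    define a where "a = D1 (D1 G) (\<theta>,t) + G (\<theta>,t)"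
    have rg: "r * g^3 = -1" using RG3[OF that] by (simp add: r_def g_def)
    have e': "a * g^3 + r * (3 * (H (\<theta>,t) * g^2)) = 0" using e by (simp add: r_def g_def a_def)
    have "0 = - g * (a * g^3 + r * (3 * (H (\<theta>,t) * g^2)))" using e' by simp
    also have "\<dots> = - a * (g * g^3) - 3 * H (\<theta>,t) * (r * (g * g^2))" by (simp add: algebra_simps)
    also have "\<dots> = - a * g^4 + 3 * H (\<theta>,t)" using rg by (simp add: power_numeral_reduce)
    finally show ?thesis by (simp add: a_def g_def algebra_simps)
  qed
  have E4: "3 * D2 H (\<theta>,t) = 4 * G (\<theta>,t)^3 * H (\<theta>,t) * (D1 (D1 G) (\<theta>,t) + G (\<theta>,t))
             + G (\<theta>,t)^4 * (D1 (D1 H) (\<theta>,t) + H (\<theta>,t))" if "t < T" for \<theta> t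
  proof -
    have s11: "smooth2_on U (D1 (D1 G))" using conjunct1[OF sD[OF conjunct1[OF sD[OF sG]]]] .
    have sym: "D2 (D1 (D1 G)) (\<theta>,t) = D1 (D1 H) (\<theta>,t)"
      using smooth_sym3[OF sG[unfolded U_def] that] by (simp add: H_def)
    have d1: "DERIV (\<lambda>\<tau>. G (\<theta>,\<tau>)^4 * (D1 (D1 G) (\<theta>,\<tau>) + G (\<theta>,\<tau>))) t :>
        of_nat 4 * (H (\<theta>,t) * G (\<theta>,t)^(4 - Suc 0)) * (D1 (D1 G) (\<theta>,t) + G (\<theta>,t))
        + G (\<theta>,t)^4 * (D2 (D1 (D1 G)) (\<theta>,t) + H (\<theta>,t))"
      by (rule DERIV_cong[OF DERIV_mult[OF DERIV_power[OF dt[OF sG that, of \<theta>], where n=4]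
          DERIV_add[OF dt[OF s11 that, of \<theta>] dt[OF sG that, of \<theta>]]]])
        (simp add: H_def algebra_simps)
    have d2: "DERIV (\<lambda>\<tau>. G (\<theta>,\<tau>)^4 * (D1 (D1 G) (\<theta>,\<tau>) + G (\<theta>,\<tau>))) t :> 3 * D2 H (\<theta>,t)"
      by (rule has_field_derivative_transform_within_open[OF DERIV_cmult[OF dt[OF sH that]], of "{..<T}"])
        (use that E3 in auto)
    show ?thesis using DERIV_unique[OF d1 d2] sym by (simp add: algebra_simps)
  qed
  have Fper: "F (\<theta> + 2*pi, t) = F (\<theta>, t)" for \<theta> t by (simp add: F_def supp_per)
  have Gper: "G (\<theta> + 2*pi, t) = G (\<theta>, t)" for \<theta> t by (simp add: G_def D2_def Fper)
  have Hper: "H (\<theta> + 2*pi, t) = H (\<theta>, t)" for \<theta> t by (simp add: H_def D2_def Gper)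
  have Hle: "H (\<theta>,t) \<le> 0" if "t < T" for \<theta> t
  proof -
    have "- H (\<theta>,t) \<ge> 0"
    proof (rule maxprin[of T "\<lambda>x. - G x" "\<lambda>x. - H x" "\<lambda>x. - D1 G x" "\<lambda>x. - D1 (D1 G) x"
          "\<lambda>x. - D1 H x" "\<lambda>x. - D1 (D1 H) x" "\<lambda>x. - D2 H x"])
      show "continuous_on (UNIV \<times> {..<T}) (\<lambda>x. - G x)"
        using smooth_cont[OF sG] by (intro continuous_intros) (simp add: U_def)
      show "continuous_on (UNIV \<times> {..<T}) (\<lambda>x. - H x)"
        using smooth_cont[OF sH] by (intro continuous_intros) (simp add: U_def)
      show "\<And>\<theta> t. t < T \<Longrightarrow> 0 < - G (\<theta>, t)" using Gneg by simp
      show "\<And>\<theta> t. - G (\<theta> + 2 * pi, t) = - G (\<theta>, t)" using Gper by simp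
      show "\<And>\<theta> t. - H (\<theta> + 2 * pi, t) = - H (\<theta>, t)" using Hper by simp
      show "\<And>\<theta> t. t < T \<Longrightarrow> DERIV (\<lambda>\<phi>. - G (\<phi>,t)) \<theta> :> - D1 G (\<theta>,t)"
        using DERIV_minus[OF dth[OF sG]] by blast
      show "\<And>\<theta> t. t < T \<Longrightarrow> DERIV (\<lambda>\<phi>. - D1 G (\<phi>,t)) \<theta> :> - D1 (D1 G) (\<theta>,t)"
        using DERIV_minus[OF dth[OF conjunct1[OF sD[OF sG]]]] by blast
      show "\<And>\<theta> t. t < T \<Longrightarrow> DERIV (\<lambda>\<phi>. - H (\<phi>,t)) \<theta> :> - D1 H (\<theta>,t)"
        using DERIV_minus[OF dth[OF sH]] by blast
      show "\<And>\<theta> t. t < T \<Longrightarrow> DERIV (\<lambda>\<phi>. - D1 H (\<phi>,t)) \<theta> :> - D1 (D1 H) (\<theta>,t)"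
        using DERIV_minus[OF dth[OF conjunct1[OF sD[OF sH]]]] by blast
      show "\<And>\<theta> t. t < T \<Longrightarrow> DERIV (\<lambda>\<tau>. - G (\<theta>,\<tau>)) t :> - H (\<theta>,t)"
        using DERIV_minus[OF dt[OF sG]] by (simp add: H_def)
      show "\<And>\<theta> t. t < T \<Longrightarrow> DERIV (\<lambda>\<tau>. - H (\<theta>,\<tau>)) t :> - D2 H (\<theta>,t)"
        using DERIV_minus[OF dt[OF sH]] by blast
      show "\<And>\<theta> t. t < T \<Longrightarrow> 3 * - H (\<theta>,t) = (- G (\<theta>,t))^4 * (- D1 (D1 G) (\<theta>,t) + - G (\<theta>,t))"
        using E3 by (simp add: algebra_simps)
      show "\<And>\<theta> t. t < T \<Longrightarrow> 3 * - D2 H (\<theta>,t) = 4 * (- G (\<theta>,t))^3 * - H (\<theta>,t) * (- D1 (D1 G) (\<theta>,t) + - G (\<theta>,t))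
                 + (- G (\<theta>,t))^4 * (- D1 (D1 H) (\<theta>,t) + - H (\<theta>,t))"
        using E4 by (simp add: algebra_simps)
      show "t < T" using that .
    qed
    then show ?thesis by simp
  qed
  show ?thesis
  proof (intro allI impI)
    fix \<theta> t assume tT: "t < T"
    have "(0::real\<times>real) \<in> K t" using bodies[OF tT] interior_subset by blast
    then have Fnn: "F (\<theta>,t) \<ge> 0" using bodies[OF tT] supp_nonneg by (simp add: F_def)
    have asup: "affine_supp K \<theta> \<tau> = F (\<theta>,\<tau>) / (- G (\<theta>,\<tau>))" if "\<tau> \<in> {..<T}" for \<tau>
    proof -
      have r: "R (\<theta>,\<tau>) > 0" using Rpos that by simp
      have "R (\<theta>,\<tau>) powr (1/3) * R (\<theta>,\<tau>) powr (-1/3) = 1"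
        using r by (simp add: powr_add[symmetric])
      then have "R (\<theta>,\<tau>) powr (1/3) = 1 / (- G (\<theta>,\<tau>))"
        using GR[of \<tau> \<theta>] that r by (simp add: field_simps)
      then show ?thesis unfolding affine_supp_def by (simp add: F_def R_def)
    qed
    have d: "DERIV (\<lambda>\<tau>. F (\<theta>,\<tau>) / (- G (\<theta>,\<tau>))) t :>
       (G (\<theta>,t) * - G (\<theta>,t) - F (\<theta>,t) * - H (\<theta>,t)) / (- G (\<theta>,t) * - G (\<theta>,t))"
      using DERIV_divide[OF dt[OF sF tT, of \<theta>] DERIV_minus[OF dt[OF sG tT, of \<theta>]]] Gneg[OF tT, of \<theta>]
      by (simp add: G_def H_def)
    have d': "DERIV (\<lambda>\<tau>. affine_supp K \<theta> \<tau>) t :>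
       (G (\<theta>,t) * - G (\<theta>,t) - F (\<theta>,t) * - H (\<theta>,t)) / (- G (\<theta>,t) * - G (\<theta>,t))"
      by (rule has_field_derivative_transform_within_open[OF d, of "{..<T}"]) (use tT asup in auto)
    have num: "G (\<theta>,t) * - G (\<theta>,t) - F (\<theta>,t) * - H (\<theta>,t) \<le> 0"
    proof -
      have "F (\<theta>,t) * H (\<theta>,t) \<le> 0" using Fnn Hle[OF tT] by (simp add: mult_nonneg_nonpos)
      moreover have "G (\<theta>,t) * G (\<theta>,t) \<ge> 0" by simp
      moreover have "G (\<theta>,t) * - G (\<theta>,t) - F (\<theta>,t) * - H (\<theta>,t) = - (G (\<theta>,t) * G (\<theta>,t)) + F (\<theta>,t) * H (\<theta>,t)"
        by simp
      ultimately show ?thesis by linarith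
    qed
    have den: "- G (\<theta>,t) * - G (\<theta>,t) > 0" using Gneg[OF tT, of \<theta>] by (simp add: mult_neg_neg)
    show "deriv (\<lambda>\<tau>. affine_supp K \<theta> \<tau>) t \<le> 0"
      using DERIV_imp_deriv[OF d'] num den by (simp add: divide_nonpos_pos)
  qed
qed

end
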